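(* Let $0<\alpha<1$. Let $N\ge1$, $0\le N_1<N$, and let $p=(p_1,\dots,p_N)$ be a probability vector with $p_1=\dots=p_{N_1}=0$ and $p_k>0$ for $N_1<k\le N$. Let $c_1,\dots,c_N$ be fixed reals, not all zero, with $0\le c_k\le1$ for $k\le N_1$, $|c_k|\le1$ for $k>N_1$, and $\sum_{k=1}^Nc_k=0$. For $0<\varepsilon\le\min_{k>N_1}p_k$ define $p(\varepsilon)$ by $p_k(\varepsilon)=c_k\varepsilon$ for $k\le N_1$ and $p_k(\varepsilon)=p_k+c_k\varepsilon$ for $k>N_1$. Write $S=\sum_{k=N_1+1}^Np_k^\alpha$. Then, as $\varepsilon\to0+$: (i) if $N_1\ge1$ and $c_k\ne0$ for some $k\le N_1$, then $\mathcal H_\alpha(p)-\mathcal H_\alpha(p(\varepsilon))\sim\frac{\varepsilon^\alpha}{\alpha-1}\Big(\sum_{k=1}^{N_1}c_k^\alpha\Big)S^{-1}$; (ii) if $c_k=0$ for all $k\le N_1$ and $\sum_{k=N_1+1}^Nc_kp_k^{\alpha-1}\ne0$, then $\mathcal H_\alpha(p)-\mathcal H_\alpha(p(\varepsilon))\sim\frac{\alpha\varepsilon}{\alpha-1}\Big(\sum_{k=N_1+1}^Nc_kp_k^{\alpha-1}\Big)S^{-1}$; (iii) if $c_k=0$ for all $k\le N_1$ and $\sum_{k=N_1+1}^Nc_kp_k^{\alpha-1}=0$, then $\mathcal H_\alpha(p)-\mathcal H_\alpha(p(\varepsilon))\sim\frac{\alpha\varepsilon^2}{2}\Big(\sum_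{k=N_1+1}^Nc_k^2p_k^{\alpha-2}\Big)S^{-1}$.
   Context: $\mathcal H_\alpha(p)=\frac1{1-\alpha}\log\sum_kp_k^\alpha$ (Rényi entropy), with $0^\alpha=0$; logarithms are natural. $a(\varepsilon)\sim b(\varepsilon)$ means $a(\varepsilon)/b(\varepsilon)\to1$. *)

theory Defs
  imports "HOL-Analysis.Analysis"
begin

text \<open>Renyi entropy of order alpha of a vector p indexed by 1..N, with natural logarithm;
  the convention 0 to the power alpha equals 0 is built into powr.\<close>
definition renyi_entropy :: "real \<Rightarrow> nat \<Rightarrow> (nat \<Rightarrow> real) \<Rightarrow> real" where
  "renyi_entropy \<alpha> N p = (1 / (1 - \<alpha>)) * ln (\<Sum>k = 1..N. p k powr \<alpha>)"

definition perturb :: "nat \<Rightarrow> (nat \<Rightarrow> real) \<Rightarrow> (nat \<Rightarrow> real) \<Rightarrow> real \<Rightarrow> nat \<Rightarrow> real" where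
  "perturb N1 p c \<epsilon> k = (if k \<le> N1 then c k * \<epsilon> else p k + c k * \<epsilon>)"

end

theory Submission imports Defs begin

lemma deriv_term:
  fixes p c a :: real
  assumes "p > 0"
  shows "((\<lambda>e. (p + c * e) powr a) has_real_derivative a * p powr (a - 1) * c) (at 0)"
proof -
  have "((\<lambda>e. (p + c * e) powr a) has_real_derivative a * (p + c * 0) powr (a - 1) * (0 + c * 1)) (at 0)"
    using assms by (auto intro!: derivative_eq_intros)
  then show ?thesis by simp
qed

lemma L1:
  fixes p c a :: real
  assumes "p > 0"
  shows "((\<lambda>e. ((p + c * e) powr a - p powr a) / e) \<longlongrightarrow> a * p powr (a - 1) * c) (at_right 0)"
proof -
  have "((\<lambda>e. ((p + c * e) powr a - (p + c * 0) powr a) / (e - 0)) \<longlongrightarrow> a * p powr (a - 1) * c) (at 0)"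
    using deriv_term[OF assms, of c a] unfolding has_field_derivative_iff .
  then have "((\<lambda>e. ((p + c * e) powr a - p powr a) / e) \<longlongrightarrow> a * p powr (a - 1) * c) (at 0)" by simp
  then show ?thesis by (rule tendsto_mono[OF at_le[OF subset_UNIV], rotated])
qed

lemma ev_pos:
  fixes p c :: real
  assumes "p > 0"
  shows "eventually (\<lambda>e. p + c * e > 0) (at_right 0)"
proof -
  have "eventually (\<lambda>e. e \<in> {0<..<p / (\<bar>c\<bar> + 1)}) (at_right 0)"
    by (rule eventually_at_right_real) (use assms in simp)
  then show ?thesis
  proof eventually_elim
    case (elim e)
    then have e0: "0 < e" and e1: "e * (\<bar>c\<bar> + 1) < p"
      by (auto simp: field_simps)
    have "- (c * e) \<le> \<bar>c\<bar> * e" using e0 by (metis abs_ge_minus_self abs_mult abs_of_pos)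
    then show ?case using e0 e1 by (simp add: algebra_simps)
  qed
qed

lemma L2:
  fixes p c a :: real
  assumes p: "p > 0"
  shows "((\<lambda>e. ((p + c * e) powr a - p powr a - a * p powr (a - 1) * c * e) / e\<^sup>2)
          \<longlongrightarrow> a * (a - 1) / 2 * c\<^sup>2 * p powr (a - 2)) (at_right 0)"
proof (rule lhopital_right_0[where f' = "\<lambda>e. a * (p + c * e) powr (a - 1) * c - a * p powr (a - 1) * c"
      and g' = "\<lambda>e. 2 * e"])
  have "((\<lambda>e. (p + c * e) powr a - p powr a - a * p powr (a - 1) * c * e) \<longlongrightarrow>
         (p + c * 0) powr a - p powr a - a * p powr (a - 1) * c * 0) (at_right 0)"
    using p by (intro tendsto_intros) auto
  then show "((\<lambda>e. (p + c * e) powr a - p powr a - a * p powr (a - 1) * c * e) \<longlongrightarrow> 0) (at_right 0)"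
    by simp
  show "((\<lambda>e. e\<^sup>2) \<longlongrightarrow> 0) (at_right (0::real))"
    by (rule tendsto_eq_intros) (auto intro: tendsto_eq_intros)
  show "\<forall>\<^sub>F x in at_right 0. (x::real)\<^sup>2 \<noteq> 0"
    by (simp add: eventually_at_right_less eventually_mono[OF eventually_at_right_less] )
  show "\<forall>\<^sub>F x in at_right 0. 2 * (x::real) \<noteq> 0"
    by (simp add: eventually_mono[OF eventually_at_right_less])
  show "\<forall>\<^sub>F x in at_right 0. ((\<lambda>e. e\<^sup>2) has_real_derivative 2 * x) (at x)"
    by (auto intro!: always_eventually derivative_eq_intros)
  show "\<forall>\<^sub>F x in at_right 0. ((\<lambda>e. (p + c * e) powr a - p powr a - a * p powr (a - 1) * c * e) has_real_derivative
      a * (p + c * x) powr (a - 1) * c - a * p powr (a - 1) * c) (at x)"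
    using ev_pos[OF p, of c]
  proof eventually_elim
    case (elim x)
    then show ?case by (auto intro!: derivative_eq_intros)
  qed
  have lim1: "((\<lambda>e. a * c / 2 * (((p + c * e) powr (a - 1) - p powr (a - 1)) / e)) \<longlongrightarrow>
        a * c / 2 * ((a - 1) * p powr (a - 1 - 1) * c)) (at_right 0)"
    by (intro tendsto_intros L1 p)
  have val: "a * c / 2 * ((a - 1) * p powr (a - 1 - 1) * c) = a * (a - 1) / 2 * c\<^sup>2 * p powr (a - 2)"
    by (simp add: power2_eq_square)
  have eq: "(\<lambda>e. (a * (p + c * e) powr (a - 1) * c - a * p powr (a - 1) * c) / (2 * e)) =
     (\<lambda>e. a * c / 2 * (((p + c * e) powr (a - 1) - p powr (a - 1)) / e))"
    by (rule ext) (simp add: field_simps)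
  show "((\<lambda>e. (a * (p + c * e) powr (a - 1) * c - a * p powr (a - 1) * c) / (2 * e)) \<longlongrightarrow>
        a * (a - 1) / 2 * c\<^sup>2 * p powr (a - 2)) (at_right 0)"
    unfolding eq val[symmetric] by (rule lim1)
qed

lemma key:
  fixes F h :: "real \<Rightarrow> real"
  assumes S: "S > 0" and lim: "((\<lambda>e. (F e - S) / h e) \<longlongrightarrow> L) (at_right 0)" and L: "L \<noteq> 0"
    and h0: "(h \<longlongrightarrow> 0) (at_right 0)" and hnz: "eventually (\<lambda>e. h e \<noteq> 0) (at_right 0)"
  shows "((\<lambda>e. (ln (F e) - ln S) / h e) \<longlongrightarrow> L / S) (at_right 0)"
proof -
  have "((\<lambda>e. h e * ((F e - S) / h e)) \<longlongrightarrow> 0 * L) (at_right 0)"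
    by (intro tendsto_intros h0 lim)
  then have "((\<lambda>e. h e * ((F e - S) / h e)) \<longlongrightarrow> 0) (at_right 0)" by simp
  then have "((\<lambda>e. F e - S) \<longlongrightarrow> 0) (at_right 0)"
    by (rule Lim_transform_eventually) (use hnz in \<open>auto elim!: eventually_mono\<close>)
  then have FS: "(F \<longlongrightarrow> S) (at_right 0)"
    using tendsto_add_const_iff[of "-S" F S] by (simp add: LIM_zero_iff)
  have ne: "eventually (\<lambda>e. (F e - S) / h e \<noteq> 0) (at_right 0)"
    using tendsto_imp_eventually_ne[OF lim L] .
  have ne2: "eventually (\<lambda>e. F e \<noteq> S) (at_right 0)"
    using ne by (auto elim!: eventually_mono)
  have Fat: "filterlim F (at S) (at_right 0)"
    by (rule filterlim_atI[OF FS ne2])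
  have D: "((\<lambda>y. (ln y - ln S) / (y - S)) \<longlongrightarrow> 1 / S) (at S)"
    using DERIV_ln_divide[OF S] unfolding has_field_derivative_iff .
  have D2: "((\<lambda>e. (ln (F e) - ln S) / (F e - S)) \<longlongrightarrow> 1 / S) (at_right 0)"
    using filterlim_compose[OF D Fat] .
  have "((\<lambda>e. (ln (F e) - ln S) / (F e - S) * ((F e - S) / h e)) \<longlongrightarrow> 1 / S * L) (at_right 0)"
    by (intro tendsto_intros D2 lim)
  then have "((\<lambda>e. (ln (F e) - ln S) / (F e - S) * ((F e - S) / h e)) \<longlongrightarrow> L / S) (at_right 0)"
    by simp
  then show ?thesis
    by (rule Lim_transform_eventually) (use ne2 hnz in \<open>auto elim!: eventually_mono\<close>)
qed

theorem mainTheorem8: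
  fixes \<alpha> :: real and N N1 :: nat and p c :: "nat \<Rightarrow> real"
  assumes alpha: "0 < \<alpha>" "\<alpha> < 1"
    and N: "1 \<le> N" "N1 < N"
    and p_sum: "(\<Sum>k = 1..N. p k) = 1"
    and p_zero: "\<And>k. 1 \<le> k \<Longrightarrow> k \<le> N1 \<Longrightarrow> p k = 0"
    and p_pos: "\<And>k. N1 < k \<Longrightarrow> k \<le> N \<Longrightarrow> p k > 0"
    and c_nz: "\<exists>k\<in>{1..N}. c k \<noteq> 0"
    and c_low: "\<And>k. 1 \<le> k \<Longrightarrow> k \<le> N1 \<Longrightarrow> 0 \<le> c k \<and> c k \<le> 1"
    and c_high: "\<And>k. N1 < k \<Longrightarrow> k \<le> N \<Longrightarrow> \<bar>c k\<bar> \<le> 1"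
    and c_sum: "(\<Sum>k = 1..N. c k) = 0"
  defines "S \<equiv> (\<Sum>k = N1 + 1..N. p k powr \<alpha>)"
  shows
    "(1 \<le> N1 \<and> (\<exists>k\<in>{1..N1}. c k \<noteq> 0) \<longrightarrow>
       ((\<lambda>\<epsilon>. (renyi_entropy \<alpha> N p - renyi_entropy \<alpha> N (perturb N1 p c \<epsilon>)) /
              (\<epsilon> powr \<alpha> / (\<alpha> - 1) * (\<Sum>k = 1..N1. c k powr \<alpha>) / S))
        \<longlongrightarrow> 1) (at_right 0))
   \<and> ((\<forall>k\<in>{1..N1}. c k = 0) \<and> (\<Sum>k = N1 + 1..N. c k * p k powr (\<alpha> - 1)) \<noteq> 0 \<longrightarrow>
       ((\<lambda>\<epsilon>. (renyi_entropy \<alpha> N p - renyi_entropy \<alpha> N (perturb N1 p c \<epsilon>)) /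
              (\<alpha> * \<epsilon> / (\<alpha> - 1) * (\<Sum>k = N1 + 1..N. c k * p k powr (\<alpha> - 1)) / S))
        \<longlongrightarrow> 1) (at_right 0))
   \<and> ((\<forall>k\<in>{1..N1}. c k = 0) \<and> (\<Sum>k = N1 + 1..N. c k * p k powr (\<alpha> - 1)) = 0 \<longrightarrow>
       ((\<lambda>\<epsilon>. (renyi_entropy \<alpha> N p - renyi_entropy \<alpha> N (perturb N1 p c \<epsilon>)) /
              (\<alpha> * \<epsilon>\<^sup>2 / 2 * (\<Sum>k = N1 + 1..N. (c k)\<^sup>2 * p k powr (\<alpha> - 2)) / S))
        \<longlongrightarrow> 1) (at_right 0))"
proof -
  let ?I = "{N1 + 1..N}"
  have finI: "finite ?I" by simp
  have split: "sum f {1..N} = sum f {1..N1} + sum f ?I" for f :: "nat \<Rightarrow> real"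
  proof -
    have "{1..N} = {1..N1} \<union> ?I" using N by auto
    then show "sum f {1..N} = sum f {1..N1} + sum f ?I"
      by (simp add: sum.union_disjoint)
  qed
  have Sp: "(\<Sum>k = 1..N. p k powr \<alpha>) = S"
    unfolding split S_def using p_zero by simp
  have S_pos: "S > 0"
    unfolding S_def by (rule sum_pos2[where i = N]) (use N p_pos[of N] in auto)
  define C where "C = (\<Sum>k = 1..N1. c k powr \<alpha>)"
  define B where "B = (\<lambda>e. \<Sum>k\<in>?I. (p k + c k * e) powr \<alpha>)"
  define F where "F = (\<lambda>e. \<Sum>k = 1..N. perturb N1 p c e k powr \<alpha>)"
  have FB: "F e = e powr \<alpha> * C + B e" if e: "e > 0" for e
  proof -
    have "(\<Sum>k = 1..N1. perturb N1 p c e k powr \<alpha>) = (\<Sum>k = 1..N1. e powr \<alpha> * c k powr \<alpha>)"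
      by (rule sum.cong) (use c_low e in \<open>auto simp: perturb_def powr_mult mult.commute\<close>)
    moreover have "(\<Sum>k\<in>?I. perturb N1 p c e k powr \<alpha>) = B e"
      unfolding B_def by (rule sum.cong) (auto simp: perturb_def)
    ultimately show ?thesis unfolding F_def split C_def by (simp add: sum_distrib_left)
  qed
  have diff: "renyi_entropy \<alpha> N p - renyi_entropy \<alpha> N (perturb N1 p c e) = (ln S - ln (F e)) / (1 - \<alpha>)" for e
    unfolding renyi_entropy_def Sp F_def by (simp add: diff_divide_distrib)
  have SI: "S = (\<Sum>k\<in>?I. p k powr \<alpha>)" by (simp add: S_def)
  have LB1: "((\<lambda>e. (B e - S) / e) \<longlongrightarrow> (\<Sum>k\<in>?I. \<alpha> * p k powr (\<alpha> - 1) * c k)) (at_right 0)"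
  proof -
    have "((\<lambda>e. \<Sum>k\<in>?I. ((p k + c k * e) powr \<alpha> - p k powr \<alpha>) / e) \<longlongrightarrow> (\<Sum>k\<in>?I. \<alpha> * p k powr (\<alpha> - 1) * c k)) (at_right 0)"
      by (intro tendsto_sum L1) (use p_pos in auto)
    moreover have "(\<lambda>e. \<Sum>k\<in>?I. ((p k + c k * e) powr \<alpha> - p k powr \<alpha>) / e) = (\<lambda>e. (B e - S) / e)"
      unfolding B_def SI by (simp add: sum_subtractf sum_divide_distrib[symmetric])
    ultimately show ?thesis by simp
  qed
  have epos: "eventually (\<lambda>e. e > 0) (at_right (0::real))"
    by (rule eventually_at_right_less)
  have id0: "((\<lambda>e. e) \<longlongrightarrow> 0) (at_right (0::real))"
    by (rule tendsto_ident_at)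
  have a1: "\<alpha> \<noteq> 1" using alpha by simp
  show ?thesis
  proof (intro conjI impI)
    assume H: "1 \<le> N1 \<and> (\<exists>k\<in>{1..N1}. c k \<noteq> 0)"
    have C_pos: "C > 0"
    proof -
      from H obtain k0 where k0: "k0 \<in> {1..N1}" "c k0 \<noteq> 0" by auto
      with c_low have "c k0 > 0" by force
      then show ?thesis unfolding C_def
        by (intro sum_pos2[OF _ k0(1)]) (use c_low in auto)
    qed
    have pw: "((\<lambda>e. e powr (1 - \<alpha>)) \<longlongrightarrow> 0) (at_right (0::real))"
      by (rule tendsto_zero_powrI[OF id0 tendsto_const]) (use epos alpha in \<open>auto elim: eventually_mono\<close>)
    have "((\<lambda>e. C + (B e - S) / e * e powr (1 - \<alpha>)) \<longlongrightarrow> C + (\<Sum>k\<in>?I. \<alpha> * p k powr (\<alpha> - 1) * c k) * 0) (at_right 0)"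
      by (intro tendsto_intros LB1 pw)
    then have "((\<lambda>e. C + (B e - S) / e * e powr (1 - \<alpha>)) \<longlongrightarrow> C) (at_right 0)" by simp
    then have lim: "((\<lambda>e. (F e - S) / e powr \<alpha>) \<longlongrightarrow> C) (at_right 0)"
    proof (rule Lim_transform_eventually)
      show "\<forall>\<^sub>F e in at_right 0. C + (B e - S) / e * e powr (1 - \<alpha>) = (F e - S) / e powr \<alpha>"
        using epos
      proof eventually_elim
        case (elim e)
        have "e powr (1 - \<alpha>) = e / e powr \<alpha>" using elim by (simp add: powr_diff)
        then show ?case using elim FB[OF elim] by (simp add: field_simps)
      qed
    qed
    have h0: "((\<lambda>e. e powr \<alpha>) \<longlongrightarrow> 0) (at_right (0::real))"
      by (rule tendsto_zero_powrI[OF id0 tendsto_const]) (use epos alpha in \<open>auto elim: eventually_mono\<close>)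
    have K: "((\<lambda>e. (ln (F e) - ln S) / e powr \<alpha>) \<longlongrightarrow> C / S) (at_right 0)"
      by (rule key[OF S_pos lim _ h0]) (use C_pos epos in \<open>auto elim: eventually_mono\<close>)
    have "((\<lambda>e. (ln (F e) - ln S) / e powr \<alpha> * (S / C)) \<longlongrightarrow> C / S * (S / C)) (at_right 0)"
      by (intro tendsto_intros K)
    then have "((\<lambda>e. (ln (F e) - ln S) / e powr \<alpha> * (S / C)) \<longlongrightarrow> 1) (at_right 0)"
      using C_pos S_pos by simp
    then show "((\<lambda>\<epsilon>. (renyi_entropy \<alpha> N p - renyi_entropy \<alpha> N (perturb N1 p c \<epsilon>)) /
              (\<epsilon> powr \<alpha> / (\<alpha> - 1) * (\<Sum>k = 1..N1. c k powr \<alpha>) / S)) \<longlongrightarrow> 1) (at_right 0)"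
    proof (rule Lim_transform_eventually)
      show "\<forall>\<^sub>F e in at_right 0. (ln (F e) - ln S) / e powr \<alpha> * (S / C) =
          (renyi_entropy \<alpha> N p - renyi_entropy \<alpha> N (perturb N1 p c e)) /
              (e powr \<alpha> / (\<alpha> - 1) * (\<Sum>k = 1..N1. c k powr \<alpha>) / S)"
        using epos
      proof eventually_elim
        case (elim e)
        then show ?case unfolding diff C_def[symmetric] using C_pos S_pos a1
          by (simp add: field_simps)
      qed
    qed
  next
    assume H: "(\<forall>k\<in>{1..N1}. c k = 0) \<and> (\<Sum>k = N1 + 1..N. c k * p k powr (\<alpha> - 1)) \<noteq> 0"
    define T where "T = (\<Sum>k = N1 + 1..N. c k * p k powr (\<alpha> - 1))"
    have T: "T \<noteq> 0" using H T_def by simp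
    have C0: "C = 0" unfolding C_def using H by simp
    have "((\<lambda>e. (B e - S) / e) \<longlongrightarrow> \<alpha> * T) (at_right 0)"
      using LB1 unfolding T_def by (simp add: sum_distrib_left mult_ac)
    then have lim: "((\<lambda>e. (F e - S) / e) \<longlongrightarrow> \<alpha> * T) (at_right 0)"
      by (rule Lim_transform_eventually) (use epos FB C0 in \<open>auto elim: eventually_mono\<close>)
    have K: "((\<lambda>e. (ln (F e) - ln S) / e) \<longlongrightarrow> \<alpha> * T / S) (at_right 0)"
      by (rule key[OF S_pos lim _ id0]) (use T alpha epos in \<open>auto elim: eventually_mono\<close>)
    have "((\<lambda>e. (ln (F e) - ln S) / e * (S / (\<alpha> * T))) \<longlongrightarrow> \<alpha> * T / S * (S / (\<alpha> * T))) (at_right 0)"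
      by (intro tendsto_intros K)
    then have "((\<lambda>e. (ln (F e) - ln S) / e * (S / (\<alpha> * T))) \<longlongrightarrow> 1) (at_right 0)"
      using T S_pos alpha by simp
    then show "((\<lambda>\<epsilon>. (renyi_entropy \<alpha> N p - renyi_entropy \<alpha> N (perturb N1 p c \<epsilon>)) /
              (\<alpha> * \<epsilon> / (\<alpha> - 1) * (\<Sum>k = N1 + 1..N. c k * p k powr (\<alpha> - 1)) / S)) \<longlongrightarrow> 1) (at_right 0)"
    proof (rule Lim_transform_eventually)
      show "\<forall>\<^sub>F e in at_right 0. (ln (F e) - ln S) / e * (S / (\<alpha> * T)) =
          (renyi_entropy \<alpha> N p - renyi_entropy \<alpha> N (perturb N1 p c e)) /
              (\<alpha> * e / (\<alpha> - 1) * (\<Sum>k = N1 + 1..N. c k * p k powr (\<alpha> - 1)) / S)"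
        using epos
      proof eventually_elim
        case (elim e)
        then show ?case unfolding diff T_def[symmetric] using T S_pos a1 alpha
          by (simp add: field_simps)
      qed
    qed
  next
    assume H: "(\<forall>k\<in>{1..N1}. c k = 0) \<and> (\<Sum>k = N1 + 1..N. c k * p k powr (\<alpha> - 1)) = 0"
    define Q where "Q = (\<Sum>k = N1 + 1..N. (c k)\<^sup>2 * p k powr (\<alpha> - 2))"
    have C0: "C = 0" unfolding C_def using H by simp
    have Q_pos: "Q > 0"
    proof -
      from c_nz obtain k0 where k0: "k0 \<in> {1..N}" "c k0 \<noteq> 0" by auto
      have "k0 \<in> ?I" using k0 H by (cases "k0 \<le> N1") auto
      then show ?thesis unfolding Q_def
        by (intro sum_pos2[of _ k0]) (use k0 p_pos[of k0] in \<open>auto intro!: mult_pos_pos\<close>)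
    qed
    have lim0: "((\<lambda>e. \<Sum>k\<in>?I. ((p k + c k * e) powr \<alpha> - p k powr \<alpha> - \<alpha> * p k powr (\<alpha> - 1) * c k * e) / e\<^sup>2)
       \<longlongrightarrow> (\<Sum>k\<in>?I. \<alpha> * (\<alpha> - 1) / 2 * (c k)\<^sup>2 * p k powr (\<alpha> - 2))) (at_right 0)"
      by (intro tendsto_sum L2) (use p_pos in auto)
    have val: "(\<Sum>k\<in>?I. \<alpha> * (\<alpha> - 1) / 2 * (c k)\<^sup>2 * p k powr (\<alpha> - 2)) = \<alpha> * (\<alpha> - 1) / 2 * Q"
      unfolding Q_def by (simp add: sum_distrib_left mult_ac)
    have eq: "(\<Sum>k\<in>?I. ((p k + c k * e) powr \<alpha> - p k powr \<alpha> - \<alpha> * p k powr (\<alpha> - 1) * c k * e) / e\<^sup>2)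
        = (B e - S) / e\<^sup>2" for e
    proof -
      have "(\<Sum>k\<in>?I. \<alpha> * p k powr (\<alpha> - 1) * c k * e) = \<alpha> * e * (\<Sum>k\<in>?I. c k * p k powr (\<alpha> - 1))"
        by (simp add: sum_distrib_left mult_ac)
      also have "\<dots> = 0" using H by simp
      finally have z: "(\<Sum>k\<in>?I. \<alpha> * p k powr (\<alpha> - 1) * c k * e) = 0" .
      show ?thesis unfolding B_def SI sum_divide_distrib[symmetric] sum_subtractf z by simp
    qed
    have "((\<lambda>e. (B e - S) / e\<^sup>2) \<longlongrightarrow> \<alpha> * (\<alpha> - 1) / 2 * Q) (at_right 0)"
      using lim0 unfolding eq val .
    then have lim: "((\<lambda>e. (F e - S) / e\<^sup>2) \<longlongrightarrow> \<alpha> * (\<alpha> - 1) / 2 * Q) (at_right 0)"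
      by (rule Lim_transform_eventually) (use epos FB C0 in \<open>auto elim: eventually_mono\<close>)
    have h0: "((\<lambda>e. e\<^sup>2) \<longlongrightarrow> 0) (at_right (0::real))"
      using tendsto_power[OF id0, of 2] by simp
    have K: "((\<lambda>e. (ln (F e) - ln S) / e\<^sup>2) \<longlongrightarrow> \<alpha> * (\<alpha> - 1) / 2 * Q / S) (at_right 0)"
      by (rule key[OF S_pos lim _ h0]) (use Q_pos alpha epos in \<open>auto elim: eventually_mono\<close>)
    have "((\<lambda>e. (ln (F e) - ln S) / e\<^sup>2 * (S / (\<alpha> * (\<alpha> - 1) / 2 * Q))) \<longlongrightarrow>
        \<alpha> * (\<alpha> - 1) / 2 * Q / S * (S / (\<alpha> * (\<alpha> - 1) / 2 * Q))) (at_right 0)"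
      by (intro tendsto_intros K)
    then have "((\<lambda>e. (ln (F e) - ln S) / e\<^sup>2 * (S / (\<alpha> * (\<alpha> - 1) / 2 * Q))) \<longlongrightarrow> 1) (at_right 0)"
      using Q_pos S_pos alpha by simp
    then show "((\<lambda>\<epsilon>. (renyi_entropy \<alpha> N p - renyi_entropy \<alpha> N (perturb N1 p c \<epsilon>)) /
              (\<alpha> * \<epsilon>\<^sup>2 / 2 * (\<Sum>k = N1 + 1..N. (c k)\<^sup>2 * p k powr (\<alpha> - 2)) / S)) \<longlongrightarrow> 1) (at_right 0)"
    proof (rule Lim_transform_eventually)
      show "\<forall>\<^sub>F e in at_right 0. (ln (F e) - ln S) / e\<^sup>2 * (S / (\<alpha> * (\<alpha> - 1) / 2 * Q)) =
          (renyi_entropy \<alpha> N p - renyi_entropy \<alpha> N (perturb N1 p c e)) /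
              (\<alpha> * e\<^sup>2 / 2 * (\<Sum>k = N1 + 1..N. (c k)\<^sup>2 * p k powr (\<alpha> - 2)) / S)"
        using epos
      proof eventually_elim
        case (elim e)
        then show ?case unfolding diff Q_def[symmetric] using Q_pos S_pos a1 alpha
          by (simp add: field_simps)
      qed
    qed
  qed
qed

end
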